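(* Let $K\ge2$ and $T^K:=\{v\in\mathbb{R}^K:\|v\|_1=1,\ \sum_{k=1}^Kv_k=0\}$. For $\beta>0$ let $\|v\|_\beta=\left(\sum_{k=1}^K|v_k|^\beta\right)^{1/\beta}$. (1) If $0<\beta<1$, then $\min_{v\in T^K}\|v\|_\beta=2^{\frac1\beta-1}$, and the minimum is attained at the vector $v$ with $v_1=-\tfrac12$, $v_2=\tfrac12$ and $v_k=0$ for $k\ge3$. (2) If $\beta>1$, then \[ \min_{v\in T^K}\|v\|_\beta=\frac12\left(\left\lfloor\tfrac K2\right\rfloor^{1-\beta}+\left\lceil\tfrac K2\right\rceil^{1-\beta}\right)^{1/\beta}, \] and the minimum is attained at the vector $v$ with $v_k=\frac{1}{2\lfloor K/2\rfloor}$ for $1\le k\le\lfloor K/2\rfloor$ and $v_k=-\frac{1}{2\lceil K/2\rceil}$ for $\lfloor K/2\rfloor<k\le K$.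
   Context: $\|v\|_1=\sum_k|v_k|$. *)

theory Defs
  imports Complex_Main
begin

text \<open>Vectors in R^K are represented as functions nat => real supported on {1..K}.\<close>

definition simplexT :: "nat \<Rightarrow> (nat \<Rightarrow> real) set" where
  "simplexT K = {v. (\<forall>k. k \<notin> {1..K} \<longrightarrow> v k = 0) \<and>
                   (\<Sum>k=1..K. \<bar>v k\<bar>) = 1 \<and> (\<Sum>k=1..K. v k) = 0}"

definition bnorm :: "real \<Rightarrow> nat \<Rightarrow> (nat \<Rightarrow> real) \<Rightarrow> real" where
  "bnorm \<beta> K v = (\<Sum>k=1..K. \<bar>v k\<bar> powr \<beta>) powr (1 / \<beta>)"

end

theory Submission
  imports Defs "HOL-Analysis.Analysis"
begin

lemma negpow_convex:
  assumes "r \<le> (0::real)" shows "convex_on {0<..} (\<lambda>x. x powr r)"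
proof (rule f''_ge0_imp_convex[where f'="\<lambda>x. r * x powr (r-1)" and f''="\<lambda>x. r * ((r-1) * x powr (r-1-1))"])
  fix x :: real assume x: "x \<in> {0<..}"
  show "DERIV (\<lambda>x. x powr r) x :> r * x powr (r-1)" using x
    by (auto intro!: derivative_eq_intros)
  show "DERIV (\<lambda>x. r * x powr (r-1)) x :> r * ((r-1) * x powr (r-1-1))" using x
    by (auto intro!: derivative_eq_intros)
  show "0 \<le> r * ((r-1) * x powr (r-1-1))" using assms x
    by (intro mult_nonpos_nonpos) (auto intro!: mult_nonpos_nonneg)
qed auto

lemma pair_convex:
  fixes g :: "real \<Rightarrow> real"
  assumes g: "convex_on {0<..} g" and "0 < p" "p \<le> a" "a \<le> b" "b \<le> q" "p + q = a + b"
  shows "g a + g b \<le> g p + g q"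
proof (cases "p = q")
  case True
  then have "a = p" "b = p" using assms by linarith+
  then show ?thesis using True by simp
next
  case False
  define t where "t = (a-p)/(q-p)"
  have qp: "q - p > 0" using assms False by auto
  have t0: "0 \<le> t" "t \<le> 1" using assms qp by (auto simp: t_def field_simps)
  have tq: "t*(q-p) = a-p" using qp by (simp add: t_def)
  have ea: "a = (1-t) *\<^sub>R p + t *\<^sub>R q" using tq by (simp add: algebra_simps)
  have eb: "b = (1-(1-t)) *\<^sub>R p + (1-t) *\<^sub>R q" using tq assms by (simp add: algebra_simps)
  have "g a \<le> (1-t) * g p + t * g q"
    unfolding ea by (rule convex_onD[OF g]) (use t0 assms in auto)
  moreover have "g b \<le> (1-(1-t)) * g p + (1-t) * g q"
    unfolding eb by (rule convex_onD[OF g]) (use t0 assms in auto)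
  ultimately show ?thesis by (simp add: algebra_simps)
qed

lemma jensen_card:
  fixes x :: "'a \<Rightarrow> real"
  assumes "finite S" "S \<noteq> {}" "\<beta> \<ge> 1" "\<And>i. i \<in> S \<Longrightarrow> x i > 0"
  shows "real (card S) * ((\<Sum>i\<in>S. x i) / card S) powr \<beta> \<le> (\<Sum>i\<in>S. x i powr \<beta>)"
proof -
  have n: "real (card S) > 0" using assms by (simp add: card_gt_0_iff)
  have "(\<lambda>x. x powr \<beta>) (\<Sum>i\<in>S. (1 / card S) *\<^sub>R x i) \<le> (\<Sum>i\<in>S. (1 / card S) * (x i powr \<beta>))"
    by (rule convex_on_sum[OF assms(1,2) powr_convex[OF assms(3)]]) (use assms n in auto)
  moreover have "(\<Sum>i\<in>S. (1 / card S) *\<^sub>R x i) = (\<Sum>i\<in>S. x i) / card S"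
    by (simp add: sum_divide_distrib)
  moreover have "(\<Sum>i\<in>S. (1 / card S) * (x i powr \<beta>)) = (\<Sum>i\<in>S. x i powr \<beta>) / card S"
    by (simp add: sum_divide_distrib)
  ultimately have h: "((\<Sum>i\<in>S. x i) / card S) powr \<beta> \<le> (\<Sum>i\<in>S. x i powr \<beta>) / card S"
    by simp
  have "real (card S) * ((\<Sum>i\<in>S. x i) / card S) powr \<beta> \<le> real (card S) * ((\<Sum>i\<in>S. x i powr \<beta>) / card S)"
    by (rule mult_left_mono[OF h]) simp
  also have "\<dots> = (\<Sum>i\<in>S. x i powr \<beta>)" using n by simp
  finally show ?thesis .
qed

lemma small_pow:
  assumes "0 < \<beta>" "\<beta> < 1" "0 \<le> x" "x \<le> (1/2::real)"
  shows "2 powr (1-\<beta>) * x \<le> x powr \<beta>"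
proof (cases "x = 0")
  case True then show ?thesis using assms by simp
next
  case False
  then have x: "x > 0" using assms by auto
  have "(1/2) powr (\<beta>-1) \<le> x powr (\<beta>-1)"
    by (rule powr_mono2') (use assms x in auto)
  moreover have "(1/2::real) powr (\<beta>-1) = 2 powr (1-\<beta>)"
    by (simp add: powr_divide powr_minus_divide[symmetric])
  moreover have "x powr \<beta> = x * x powr (\<beta> - 1)" using x
    by (simp add: powr_diff)
  ultimately show ?thesis using x by (simp add: mult.commute)
qed

lemma scal: assumes x: "x > 0" shows "x * (1/(2*x)) powr \<beta> = 2 powr (-\<beta>) * x powr (1-(\<beta>::real))"
proof -
  have "(1/(2*x)) powr \<beta> = 1 / (2 powr \<beta> * x powr \<beta>)"
    using x by (simp add: powr_divide powr_mult)
  moreover have "x powr (1-\<beta>) = x / x powr \<beta>" using x by (simp add: powr_diff)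
  moreover have "2 powr (-\<beta>) = 1 / 2 powr \<beta>" by (simp add: powr_minus_divide)
  ultimately show ?thesis by simp
qed


lemma sign_split:
  assumes "finite S"
  shows "(\<Sum>k\<in>S. f k) = (\<Sum>k\<in>{k\<in>S. v k > 0}. f k) + (\<Sum>k\<in>{k\<in>S. v k < 0}. f k) + (\<Sum>k\<in>{k\<in>S. v k = (0::real)}. f k)"
proof -
  have "(\<Sum>k\<in>S. f k) = (\<Sum>k\<in>S. (if v k > 0 then f k else 0) + (if v k < 0 then f k else 0) + (if v k = 0 then f k else 0))"
    by (rule sum.cong) auto
  also have "\<dots> = (\<Sum>k\<in>S. (if v k > 0 then f k else 0)) + (\<Sum>k\<in>S. (if v k < 0 then f k else 0)) + (\<Sum>k\<in>S. (if v k = 0 then f k else 0))"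
    by (simp add: sum.distrib)
  finally show ?thesis using assms by (simp add: sum.inter_filter)
qed

lemma half_sums:
  assumes v: "v \<in> simplexT K"
  shows "(\<Sum>k\<in>{k\<in>{1..K}. v k > 0}. v k) = 1/2" "(\<Sum>k\<in>{k\<in>{1..K}. v k < 0}. - v k) = 1/2"
proof -
  let ?P = "{k\<in>{1..K}. v k > 0}" and ?N = "{k\<in>{1..K}. v k < 0}" and ?Z = "{k\<in>{1..K}. v k = 0}"
  have a: "(\<Sum>k=1..K. \<bar>v k\<bar>) = 1" "(\<Sum>k=1..K. v k) = 0" using v by (auto simp: simplexT_def)
  have z1: "(\<Sum>k\<in>?Z. v k) = 0" "(\<Sum>k\<in>?Z. \<bar>v k\<bar>) = 0" by (auto intro: sum.neutral)
  have "(\<Sum>k\<in>?P. \<bar>v k\<bar>) = (\<Sum>k\<in>?P. v k)" by (rule sum.cong) auto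
  moreover have "(\<Sum>k\<in>?N. \<bar>v k\<bar>) = (\<Sum>k\<in>?N. - v k)" by (rule sum.cong) auto
  moreover have "(\<Sum>k\<in>?N. - v k) = - (\<Sum>k\<in>?N. v k)" by (simp add: sum_negf)
  ultimately show "(\<Sum>k\<in>?P. v k) = 1/2" "(\<Sum>k\<in>?N. - v k) = 1/2"
    using a sign_split[of "{1..K}" "\<lambda>k. v k" v] sign_split[of "{1..K}" "\<lambda>k. \<bar>v k\<bar>" v] z1 by auto
qed

lemma pow_split:
  fixes v :: "nat \<Rightarrow> real"
  assumes "\<beta> > 0"
  shows "(\<Sum>k=1..K. \<bar>v k\<bar> powr \<beta>) = (\<Sum>k\<in>{k\<in>{1..K}. v k > 0}. v k powr \<beta>) + (\<Sum>k\<in>{k\<in>{1..K}. v k < 0}. (- v k) powr \<beta>)"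
proof -
  let ?P = "{k\<in>{1..K}. v k > 0}" and ?N = "{k\<in>{1..K}. v k < 0}" and ?Z = "{k\<in>{1..K}. v k = 0}"
  have z1: "(\<Sum>k\<in>?Z. \<bar>v k\<bar> powr \<beta>) = 0" by (rule sum.neutral) simp
  have "(\<Sum>k\<in>?P. \<bar>v k\<bar> powr \<beta>) = (\<Sum>k\<in>?P. v k powr \<beta>)" by (rule sum.cong) auto
  moreover have "(\<Sum>k\<in>?N. \<bar>v k\<bar> powr \<beta>) = (\<Sum>k\<in>?N. (- v k) powr \<beta>)" by (rule sum.cong) auto
  ultimately show ?thesis using sign_split[of "{1..K}" "\<lambda>k. \<bar>v k\<bar> powr \<beta>" v] z1 by simp
qed

lemma part1_lb:
  assumes "0 < \<beta>" "\<beta> < 1" and v: "v \<in> simplexT K"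
  shows "2 powr (1-\<beta>) \<le> (\<Sum>k=1..K. \<bar>v k\<bar> powr \<beta>)"
proof -
  let ?P = "{k\<in>{1..K}. v k > 0}" and ?N = "{k\<in>{1..K}. v k < 0}"
  have h: "\<bar>v k\<bar> \<le> 1/2" if k: "k \<in> {1..K}" for k
  proof (cases "v k > 0")
    case True
    then have "v k \<le> (\<Sum>j\<in>?P. v j)" by (intro member_le_sum) (use k in auto)
    then show ?thesis using half_sums(1)[OF v] True by simp
  next
    case False
    show ?thesis
    proof (cases "v k < 0")
      case True
      then have "- v k \<le> (\<Sum>j\<in>?N. - v j)" by (intro member_le_sum) (use k in auto)
      then show ?thesis using half_sums(2)[OF v] True by simp
    next
      case False2: False
      then show ?thesis using False by simp
    qed
  qed
  have "2 powr (1-\<beta>) = (\<Sum>k=1..K. 2 powr (1-\<beta>) * \<bar>v k\<bar>)"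
    using v by (simp add: simplexT_def sum_distrib_left[symmetric])
  also have "\<dots> \<le> (\<Sum>k=1..K. \<bar>v k\<bar> powr \<beta>)"
    by (rule sum_mono) (use h assms in \<open>auto intro!: small_pow\<close>)
  finally show ?thesis .
qed

lemma part_lb:
  assumes "\<beta> > 1" "finite S" "(\<Sum>k\<in>S. x k) = 1/2" "\<And>k. k \<in> S \<Longrightarrow> x k > 0"
  shows "S \<noteq> {}" "2 powr (-\<beta>) * real (card S) powr (1-\<beta>) \<le> (\<Sum>k\<in>S. x k powr \<beta>)"
proof -
  show ne: "S \<noteq> {}" using assms by auto
  have n: "real (card S) > 0" using ne assms by (simp add: card_gt_0_iff)
  have "real (card S) * ((\<Sum>i\<in>S. x i) / card S) powr \<beta> \<le> (\<Sum>i\<in>S. x i powr \<beta>)"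
    by (rule jensen_card) (use assms ne in auto)
  moreover have "(\<Sum>i\<in>S. x i) / card S = 1 / (2 * card S)" unfolding assms(3) by simp
  ultimately show "2 powr (-\<beta>) * real (card S) powr (1-\<beta>) \<le> (\<Sum>k\<in>S. x k powr \<beta>)"
    using scal[OF n, of \<beta>] by simp
qed

lemma G_ineq:
  fixes p q K :: nat
  assumes "\<beta> > 1" "p \<ge> 1" "q \<ge> 1" "p + q \<le> K"
  shows "real (K div 2) powr (1-\<beta>) + real ((K+1) div 2) powr (1-\<beta>) \<le> real p powr (1-\<beta>) + real q powr (1-\<beta>)"
proof -
  define G where "G = (\<lambda>x::real. x powr (1-\<beta>))"
  have cv: "convex_on {0<..} G" unfolding G_def by (rule negpow_convex) (use assms in auto)
  have "G (real q) \<ge> G (real (K - p))" unfolding G_def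
    by (rule powr_mono2') (use assms in auto)
  moreover have "G (real (K div 2)) + G (real ((K+1) div 2)) \<le> G (real p) + G (real (K - p))"
  proof (cases "2 * p \<le> K")
    case True
    have n1: "K div 2 + (K+1) div 2 = K" "p \<le> K div 2" "(K+1) div 2 \<le> K - p" "K div 2 \<le> (K+1) div 2"
      using True by auto
    have r1: "real (K div 2) + real ((K+1) div 2) = real p + real (K - p)"
      using n1 assms by (simp add: of_nat_add[symmetric] del: of_nat_add)
    show ?thesis
      by (rule pair_convex[OF cv]) (use True assms n1 r1 in auto)
  next
    case False
    have n1: "K div 2 + (K+1) div 2 = K" "K - p \<le> K div 2" "(K+1) div 2 \<le> p" "K div 2 \<le> (K+1) div 2"
      using False by auto
    have r1: "real (K div 2) + real ((K+1) div 2) = real (K - p) + real p"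
      using n1 assms by (simp add: of_nat_add[symmetric] del: of_nat_add)
    have "G (real (K div 2)) + G (real ((K+1) div 2)) \<le> G (real (K-p)) + G (real p)"
      by (rule pair_convex[OF cv]) (use False assms n1 r1 in auto)
    then show ?thesis by simp
  qed
  ultimately show ?thesis unfolding G_def by simp
qed


lemma sum12:
  fixes f :: "nat \<Rightarrow> real"
  assumes "K \<ge> 2" "\<And>k. k \<noteq> 1 \<Longrightarrow> k \<noteq> 2 \<Longrightarrow> f k = 0"
  shows "(\<Sum>k=1..K. f k) = f 1 + f 2"
proof -
  have e: "{1..K} = insert 1 (insert 2 {3..K})" using assms by auto
  have "(\<Sum>k=3..K. f k) = 0" by (rule sum.neutral) (use assms in auto)
  then show ?thesis unfolding e by simp
qed

lemma sum_split_ab: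
  fixes f :: "nat \<Rightarrow> real"
  assumes "a \<le> K"
  shows "(\<Sum>k=1..K. f k) = (\<Sum>k=1..a. f k) + (\<Sum>k=a+1..K. f k)"
proof -
  have e: "{1..K} = {1..a} \<union> {a+1..K}" using assms by auto
  show ?thesis unfolding e by (rule sum.union_disjoint) auto
qed

lemma part1_all:
  fixes K :: nat and \<beta> :: real
  assumes K: "K \<ge> 2" and b: "0 < \<beta>" "\<beta> < 1"
  defines "w \<equiv> (\<lambda>k. if k = 1 then -1/2 else if k = 2 then 1/2 else 0 :: real)"
  shows "w \<in> simplexT K \<and> bnorm \<beta> K w = 2 powr (1/\<beta> - 1) \<and>
               (\<forall>v \<in> simplexT K. bnorm \<beta> K w \<le> bnorm \<beta> K v)"
proof -
  have s1: "(\<Sum>k=1..K. \<bar>w k\<bar>) = 1" by (subst sum12[OF K]) (auto simp: w_def)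
  have s2: "(\<Sum>k=1..K. w k) = 0" by (subst sum12[OF K]) (auto simp: w_def)
  have mem: "w \<in> simplexT K" unfolding simplexT_def using s1 s2 K by (auto simp: w_def)
  have s3: "(\<Sum>k=1..K. \<bar>w k\<bar> powr \<beta>) = 2 powr (1-\<beta>)"
  proof -
    have "(\<Sum>k=1..K. \<bar>w k\<bar> powr \<beta>) = 2 * (1/2) powr \<beta>"
      by (subst sum12[OF K]) (use b in \<open>auto simp: w_def\<close>)
    also have "\<dots> = 2 powr 1 * 2 powr (-\<beta>)" by (simp add: powr_minus_divide powr_divide)
    also have "\<dots> = 2 powr (1-\<beta>)" by (subst powr_add[symmetric]) simp
    finally show ?thesis .
  qed
  have nw: "bnorm \<beta> K w = 2 powr (1/\<beta> - 1)"
    unfolding bnorm_def s3 using b by (simp add: powr_powr field_simps)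
  have "bnorm \<beta> K w \<le> bnorm \<beta> K v" if v: "v \<in> simplexT K" for v
    unfolding bnorm_def s3
    by (rule powr_mono2) (use b part1_lb[OF b v] in auto)
  then show ?thesis using mem nw by auto
qed

lemma part2_all:
  fixes K :: nat and \<beta> :: real
  assumes K: "K \<ge> 2" and b: "\<beta> > 1"
  defines "w \<equiv> (\<lambda>k. if 1 \<le> k \<and> k \<le> K div 2 then 1 / (2 * real (K div 2))
                         else if K div 2 < k \<and> k \<le> K then - 1 / (2 * real ((K + 1) div 2))
                         else 0 :: real)"
  shows "w \<in> simplexT K \<and>
               bnorm \<beta> K w = 1/2 * (real (K div 2) powr (1 - \<beta>)
                                   + real ((K + 1) div 2) powr (1 - \<beta>)) powr (1/\<beta>) \<and>
               (\<forall>v \<in> simplexT K. bnorm \<beta> K w \<le> bnorm \<beta> K v)"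
proof -
  define a where "a = K div 2"
  define c where "c = (K + 1) div 2"
  have ac: "a \<ge> 1" "c \<ge> 1" "a + c = K" "a \<le> K" using K by (auto simp: a_def c_def)
  have ra: "real a > 0" "real c > 0" using ac by auto
  have wl: "w k = 1 / (2 * real a)" if "k \<in> {1..a}" for k using that by (auto simp: w_def a_def)
  have wr: "w k = - 1 / (2 * real c)" if "k \<in> {a+1..K}" for k using that by (auto simp: w_def a_def c_def)
  have cr: "card {a+1..K} = c" using ac by auto
  have gen: "(\<Sum>k=1..K. g (w k)) = real a * g (1 / (2 * real a)) + real c * g (- 1 / (2 * real c))" for g
  proof -
    have "(\<Sum>k=1..a. g (w k)) = (\<Sum>k=1..a. g (1 / (2 * real a)))" by (rule sum.cong) (auto simp: wl)
    moreover have "(\<Sum>k=a+1..K. g (w k)) = (\<Sum>k=a+1..K. g (- 1 / (2 * real c)))" by (rule sum.cong) (auto simp: wr)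
    ultimately show ?thesis using sum_split_ab[OF ac(4), of "\<lambda>k. g (w k)"] cr by simp
  qed
  have s1: "(\<Sum>k=1..K. \<bar>w k\<bar>) = 1" using gen[of abs] ra by simp
  have s2: "(\<Sum>k=1..K. w k) = 0" using gen[of "\<lambda>x. x"] ra by simp
  have mem: "w \<in> simplexT K" unfolding simplexT_def using s1 s2 by (auto simp: w_def)
  define X where "X = real a powr (1 - \<beta>) + real c powr (1 - \<beta>)"
  have X0: "X \<ge> 0" by (simp add: X_def)
  have s3: "(\<Sum>k=1..K. \<bar>w k\<bar> powr \<beta>) = 2 powr (-\<beta>) * X"
  proof -
    have "(\<Sum>k=1..K. \<bar>w k\<bar> powr \<beta>) = real a * (1 / (2 * real a)) powr \<beta> + real c * (1 / (2 * real c)) powr \<beta>"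
      using gen[of "\<lambda>x. \<bar>x\<bar> powr \<beta>"] ra by simp
    also have "\<dots> = 2 powr (-\<beta>) * X" unfolding X_def using scal[OF ra(1)] scal[OF ra(2)]
      by (simp add: algebra_simps)
    finally show ?thesis .
  qed
  have nw: "bnorm \<beta> K w = 1/2 * X powr (1/\<beta>)"
  proof -
    have "bnorm \<beta> K w = (2 powr (-\<beta>)) powr (1/\<beta>) * X powr (1/\<beta>)"
      unfolding bnorm_def s3 using X0 by (simp add: powr_mult)
    also have "(2 powr (-\<beta>)) powr (1/\<beta>) = (2::real) powr (-1)" using b by (simp add: powr_powr)
    also have "(2::real) powr (-1) = 1/2" by (simp add: powr_minus_divide)
    finally show ?thesis .
  qed
  have "bnorm \<beta> K w \<le> bnorm \<beta> K v" if v: "v \<in> simplexT K" for v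
  proof -
    let ?P = "{k\<in>{1..K}. v k > 0}" and ?N = "{k\<in>{1..K}. v k < 0}"
    have P: "?P \<noteq> {}" "2 powr (-\<beta>) * real (card ?P) powr (1-\<beta>) \<le> (\<Sum>k\<in>?P. v k powr \<beta>)"
      by (rule part_lb[OF b _ half_sums(1)[OF v]]; simp)+
    have N: "?N \<noteq> {}" "2 powr (-\<beta>) * real (card ?N) powr (1-\<beta>) \<le> (\<Sum>k\<in>?N. (- v k) powr \<beta>)"
      by (rule part_lb[OF b _ half_sums(2)[OF v]]; simp)+
    have cP: "card ?P \<ge> 1" "card ?N \<ge> 1" using P(1) N(1) by (auto simp: Suc_le_eq card_gt_0_iff)
    have "card ?P + card ?N = card (?P \<union> ?N)" by (rule card_Un_disjoint[symmetric]) auto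
    also have "\<dots> \<le> card {1..K}" by (rule card_mono) auto
    finally have cs: "card ?P + card ?N \<le> K" by simp
    have G: "X \<le> real (card ?P) powr (1-\<beta>) + real (card ?N) powr (1-\<beta>)"
      unfolding X_def a_def c_def by (rule G_ineq[OF b cP cs])
    have "2 powr (-\<beta>) * X \<le> 2 powr (-\<beta>) * (real (card ?P) powr (1-\<beta>) + real (card ?N) powr (1-\<beta>))"
      by (rule mult_left_mono[OF G]) simp
    also have "\<dots> \<le> (\<Sum>k=1..K. \<bar>v k\<bar> powr \<beta>)"
      using pow_split[where v=v and K=K and \<beta>=\<beta>] P(2) N(2) b unfolding distrib_left by linarith
    finally have "2 powr (-\<beta>) * X \<le> (\<Sum>k=1..K. \<bar>v k\<bar> powr \<beta>)" .
    then show ?thesis unfolding bnorm_def s3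
      by (intro powr_mono2) (use b X0 in auto)
  qed
  then have all: "\<forall>v \<in> simplexT K. bnorm \<beta> K w \<le> bnorm \<beta> K v" by blast
  show ?thesis using mem nw[unfolded X_def a_def c_def] all by blast
qed

theorem lemma2:
  fixes K :: nat and \<beta> :: real
  assumes "K \<ge> 2"
  shows "(0 < \<beta> \<and> \<beta> < 1 \<longrightarrow>
           (let w = (\<lambda>k. if k = 1 then -1/2 else if k = 2 then 1/2 else 0 :: real)
            in w \<in> simplexT K \<and> bnorm \<beta> K w = 2 powr (1/\<beta> - 1) \<and>
               (\<forall>v \<in> simplexT K. bnorm \<beta> K w \<le> bnorm \<beta> K v)))
       \<and> (\<beta> > 1 \<longrightarrow>
           (let w = (\<lambda>k. if 1 \<le> k \<and> k \<le> K div 2 then 1 / (2 * real (K div 2))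
                         else if K div 2 < k \<and> k \<le> K then - 1 / (2 * real ((K + 1) div 2))
                         else 0 :: real)
            in w \<in> simplexT K \<and>
               bnorm \<beta> K w = 1/2 * (real (K div 2) powr (1 - \<beta>)
                                   + real ((K + 1) div 2) powr (1 - \<beta>)) powr (1/\<beta>) \<and>
               (\<forall>v \<in> simplexT K. bnorm \<beta> K w \<le> bnorm \<beta> K v)))"
  unfolding Let_def using part1_all[OF assms] part2_all[OF assms] by blast

end
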